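(* Let $S$ be a Rauzy scheme for a recurrent infinite word $W$, and let $u$ be a bispecial factor of $W$ such that $F(l_1)\sqsubseteq u$ for some symmetric path $l_1$ of $S$. Then there is a symmetric path $l$ in $S$ with $F(l)=u$.
   Context: A factor $u$ of $W$ is right special if there are distinct letters $a\ne b$ with $ua$ and $ub$ factors of $W$, left special if there are distinct letters $a\ne b$ with $au,bu$ factors of $W$, and bispecial if it is both. An infinite word is recurrent if every factor occurs infinitely often. $u\sqsubseteq w$: $u$ is a factor of $w$; $u\sqsubseteq_k w$: $u$ occurs in $w$ at least $k$ times. A graph with words is a strongly connected finite directed graph (multiple edges and loops allowed) in which every edge $e$ carries a front word $F(e)$ and a back word $B(e)$, and every vertex either has in-degree $1$ and out-degree $>1$ (distributing vertex) or in-degree $>1$ and out-degree $1$ (collecting vertex). A path is a finite nonempty sequence of edges $v_1\dots v_n$ with each $v_{i+1}$ starting where $v_i$ ends; subpaths and $s_1\sqsubseteq_k s_2$ are defined via edge records. A path is symmetric if its first edge starts at a collecting vertex and its last edge ends at a distributing vertex. For $s=v_1\dots v_n$, $F(s)$ is the concatenation, in order, of the front words of $v_1$ and of all $v_i$ ($i\ge2$) starting at a distributing vertex; $B(s)$ is the concatenation, in order, of the back words of all $v_i$ ($i\le n-1$) ending at a collecting vertex and of $v_n$. A Rauzy scheme for $W$ is a graph with words such that: (1) it has more than one edge; (2) front words of edges leaving a common distributing vertex have pairwise distinct first letters, and back words of edges entering a common collecting vertex have pairwise distinct last letters; (3) $F(s)=B(s)$ for every symmetric path $s$; (4) for symmetric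 paths $s_1,s_2$ and $k\ge1$, $F(s_1)\sqsubseteq_k F(s_2)$ implies $s_1\sqsubseteq_k s_2$; (5) all words on edges are factors of $W$; (6) every factor of $W$ is a factor of $F(s)$ for some symmetric path $s$; (7) for every edge $e$ there is a factor $u_e$ of $W$ such that every symmetric path $s$ with $u_e\sqsubseteq F(s)$ passes through $e$. *)

theory Defs
  imports Main
begin

definition factor_of_inf :: "'a list \<Rightarrow> (nat \<Rightarrow> 'a) \<Rightarrow> bool" where
  "factor_of_inf u W \<longleftrightarrow> (\<exists>i. u = map W [i..<i + length u])"

definition recurrent :: "(nat \<Rightarrow> 'a) \<Rightarrow> bool" where
  "recurrent W \<longleftrightarrow> (\<forall>u. factor_of_inf u W \<longrightarrow>
      infinite {i. u = map W [i..<i + length u]})"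

definition right_special :: "'a list \<Rightarrow> (nat \<Rightarrow> 'a) \<Rightarrow> bool" where
  "right_special u W \<longleftrightarrow> (\<exists>a b. a \<noteq> b \<and> factor_of_inf (u @ [a]) W \<and> factor_of_inf (u @ [b]) W)"

definition left_special :: "'a list \<Rightarrow> (nat \<Rightarrow> 'a) \<Rightarrow> bool" where
  "left_special u W \<longleftrightarrow> (\<exists>a b. a \<noteq> b \<and> factor_of_inf (a # u) W \<and> factor_of_inf (b # u) W)"

definition bispecial :: "'a list \<Rightarrow> (nat \<Rightarrow> 'a) \<Rightarrow> bool" where
  "bispecial u W \<longleftrightarrow> factor_of_inf u W \<and> right_special u W \<and> left_special u W"

definition occurrences :: "'a list \<Rightarrow> 'a list \<Rightarrow> nat set" where
  "occurrences u w = {i. i + length u \<le> length w \<and> take (length u) (drop i w) = u}"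

definition occ_count :: "'a list \<Rightarrow> 'a list \<Rightarrow> nat" where
  "occ_count u w = card (occurrences u w)"

definition factor :: "'a list \<Rightarrow> 'a list \<Rightarrow> bool" where
  "factor u w \<longleftrightarrow> (\<exists>p q. w = p @ u @ q)"

record ('v, 'e, 'a) gww =
  verts :: "'v set"
  edges :: "'e set"
  src :: "'e \<Rightarrow> 'v"
  tgt :: "'e \<Rightarrow> 'v"
  frontw :: "'e \<Rightarrow> 'a list"
  backw :: "'e \<Rightarrow> 'a list"

definition in_deg :: "('v, 'e, 'a) gww \<Rightarrow> 'v \<Rightarrow> nat" where
  "in_deg G v = card {e \<in> edges G. tgt G e = v}"

definition out_deg :: "('v, 'e, 'a) gww \<Rightarrow> 'v \<Rightarrow> nat" where
  "out_deg G v = card {e \<in> edges G. src G e = v}"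

definition distributing :: "('v, 'e, 'a) gww \<Rightarrow> 'v \<Rightarrow> bool" where
  "distributing G v \<longleftrightarrow> in_deg G v = 1 \<and> out_deg G v > 1"

definition collecting :: "('v, 'e, 'a) gww \<Rightarrow> 'v \<Rightarrow> bool" where
  "collecting G v \<longleftrightarrow> in_deg G v > 1 \<and> out_deg G v = 1"

definition edge_rel :: "('v, 'e, 'a) gww \<Rightarrow> ('v \<times> 'v) set" where
  "edge_rel G = {(src G e, tgt G e) | e. e \<in> edges G}"

definition graph_with_words :: "('v, 'e, 'a) gww \<Rightarrow> bool" where
  "graph_with_words G \<longleftrightarrow>
     finite (verts G) \<and> finite (edges G) \<and>
     (\<forall>e \<in> edges G. src G e \<in> verts G \<and> tgt G e \<in> verts G) \<and>
     (\<forall>v \<in> verts G. \<forall>w \<in> verts G. (v, w) \<in> (edge_rel G)\<^sup>*) \<and>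
     (\<forall>v \<in> verts G. distributing G v \<or> collecting G v)"

definition is_path :: "('v, 'e, 'a) gww \<Rightarrow> 'e list \<Rightarrow> bool" where
  "is_path G s \<longleftrightarrow> s \<noteq> [] \<and> set s \<subseteq> edges G \<and>
     (\<forall>i. Suc i < length s \<longrightarrow> tgt G (s ! i) = src G (s ! Suc i))"

definition symmetric_path :: "('v, 'e, 'a) gww \<Rightarrow> 'e list \<Rightarrow> bool" where
  "symmetric_path G s \<longleftrightarrow> is_path G s \<and>
     collecting G (src G (hd s)) \<and> distributing G (tgt G (last s))"

definition path_front :: "('v, 'e, 'a) gww \<Rightarrow> 'e list \<Rightarrow> 'a list" where
  "path_front G s = frontw G (hd s) @
     concat (map (frontw G) (filter (\<lambda>e. distributing G (src G e)) (tl s)))"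

definition path_back :: "('v, 'e, 'a) gww \<Rightarrow> 'e list \<Rightarrow> 'a list" where
  "path_back G s =
     concat (map (backw G) (filter (\<lambda>e. collecting G (tgt G e)) (butlast s))) @ backw G (last s)"

definition rauzy_scheme :: "('v, 'e, 'a) gww \<Rightarrow> (nat \<Rightarrow> 'a) \<Rightarrow> bool" where
  "rauzy_scheme G W \<longleftrightarrow> graph_with_words G \<and>
     \<comment> \<open>(1)\<close>
     card (edges G) > 1 \<and>
     \<comment> \<open>(2)\<close>
     (\<forall>e1 \<in> edges G. \<forall>e2 \<in> edges G. e1 \<noteq> e2 \<and> src G e1 = src G e2
        \<and> distributing G (src G e1) \<longrightarrow>
        frontw G e1 \<noteq> [] \<and> frontw G e2 \<noteq> [] \<and> hd (frontw G e1) \<noteq> hd (frontw G e2)) \<and>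
     (\<forall>e1 \<in> edges G. \<forall>e2 \<in> edges G. e1 \<noteq> e2 \<and> tgt G e1 = tgt G e2
        \<and> collecting G (tgt G e1) \<longrightarrow>
        backw G e1 \<noteq> [] \<and> backw G e2 \<noteq> [] \<and> last (backw G e1) \<noteq> last (backw G e2)) \<and>
     \<comment> \<open>(3)\<close>
     (\<forall>s. symmetric_path G s \<longrightarrow> path_front G s = path_back G s) \<and>
     \<comment> \<open>(4)\<close>
     (\<forall>s1 s2 k. symmetric_path G s1 \<and> symmetric_path G s2 \<and> k \<ge> 1 \<and>
        occ_count (path_front G s1) (path_front G s2) \<ge> k \<longrightarrow> occ_count s1 s2 \<ge> k) \<and>
     \<comment> \<open>(5)\<close>
     (\<forall>e \<in> edges G. factor_of_inf (frontw G e) W \<and> factor_of_inf (backw G e) W) \<and>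
     \<comment> \<open>(6)\<close>
     (\<forall>u. factor_of_inf u W \<longrightarrow> (\<exists>s. symmetric_path G s \<and> factor u (path_front G s))) \<and>
     \<comment> \<open>(7)\<close>
     (\<forall>e \<in> edges G. \<exists>u. factor_of_inf u W \<and>
        (\<forall>s. symmetric_path G s \<and> factor u (path_front G s) \<longrightarrow> e \<in> set s))"

end

theory Submission
  imports Defs
begin

lemma is_path_Cons:
  "is_path G (e # ds) \<longleftrightarrow> e \<in> edges G \<and> (ds = [] \<or> (is_path G ds \<and> tgt G e = src G (hd ds)))"
proof (cases ds)
  case Nil then show ?thesis by (simp add: is_path_def)
next
  case (Cons d ds')
  show ?thesis
  proof
    assume H: "is_path G (e # ds)"
    have "tgt G e = src G d" using H Cons unfolding is_path_def by (metis length_Cons nth_Cons_0 nth_Cons_Suc zero_less_Suc Suc_less_eq)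
    moreover have "is_path G ds" using H Cons unfolding is_path_def
      by (metis (no_types, lifting) Suc_less_eq insert_subset length_Cons list.distinct(1) list.simps(15) nth_Cons_Suc)
    ultimately show "e \<in> edges G \<and> (ds = [] \<or> (is_path G ds \<and> tgt G e = src G (hd ds)))"
      using H Cons by (auto simp: is_path_def)
  next
    assume H: "e \<in> edges G \<and> (ds = [] \<or> (is_path G ds \<and> tgt G e = src G (hd ds)))"
    then have p: "is_path G ds" "tgt G e = src G d" using Cons by auto
    show "is_path G (e # ds)" unfolding is_path_def
    proof (intro conjI allI impI)
      show "set (e # ds) \<subseteq> edges G" using H p by (auto simp: is_path_def)
      fix i assume i: "Suc i < length (e # ds)"
      show "tgt G ((e # ds) ! i) = src G ((e # ds) ! Suc i)"
      proof (cases i)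
        case 0 then show ?thesis using p Cons by simp
      next
        case (Suc j) then show ?thesis using p i by (simp add: is_path_def)
      qed
    qed simp
  qed
qed

lemma is_path_append:
  "xs \<noteq> [] \<Longrightarrow> ys \<noteq> [] \<Longrightarrow> is_path G (xs @ ys) \<longleftrightarrow> is_path G xs \<and> is_path G ys \<and> tgt G (last xs) = src G (hd ys)"
proof (induction xs)
  case Nil then show ?case by simp
next
  case (Cons x xs)
  show ?case
  proof (cases "xs = []")
    case True then show ?thesis using Cons.prems by (simp add: is_path_Cons)
  next
    case False
    then show ?thesis using Cons by (auto simp: is_path_Cons)
  qed
qed


definition Cf :: "('v, 'e, 'a) gww \<Rightarrow> 'e list \<Rightarrow> 'a list" where
  "Cf G t = concat (map (frontw G) (filter (\<lambda>e. distributing G (src G e)) t))"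
definition Cb :: "('v, 'e, 'a) gww \<Rightarrow> 'e list \<Rightarrow> 'a list" where
  "Cb G t = concat (map (backw G) (filter (\<lambda>e. collecting G (tgt G e)) t))"

lemma Cf_simps[simp]: "Cf G [] = []" "Cf G (xs @ ys) = Cf G xs @ Cf G ys"
  "Cf G (e # ys) = (if distributing G (src G e) then frontw G e @ Cf G ys else Cf G ys)"
  by (auto simp: Cf_def)
lemma Cb_simps[simp]: "Cb G [] = []" "Cb G (xs @ ys) = Cb G xs @ Cb G ys"
  "Cb G (e # ys) = (if collecting G (tgt G e) then backw G e @ Cb G ys else Cb G ys)"
  by (auto simp: Cb_def)

lemma F_append: "s \<noteq> [] \<Longrightarrow> path_front G (s @ t) = path_front G s @ Cf G t"
  by (cases s) (auto simp: path_front_def Cf_def)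

lemma B_append: "t \<noteq> [] \<Longrightarrow> path_back G (s @ t) = Cb G s @ path_back G t"
  by (auto simp: path_back_def Cb_def butlast_append)

lemma rs_FB: "rauzy_scheme G W \<Longrightarrow> symmetric_path G s \<Longrightarrow> path_front G s = path_back G s"
  by (simp add: rauzy_scheme_def)

lemma rs_occ: "rauzy_scheme G W \<Longrightarrow> symmetric_path G s1 \<Longrightarrow> symmetric_path G s2 \<Longrightarrow> k \<ge> 1 \<Longrightarrow>
   occ_count (path_front G s1) (path_front G s2) \<ge> k \<Longrightarrow> occ_count s1 s2 \<ge> k"
  unfolding rauzy_scheme_def by blast

lemma rs_cover: "rauzy_scheme G W \<Longrightarrow> factor_of_inf u W \<Longrightarrow> \<exists>s. symmetric_path G s \<and> factor u (path_front G s)"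
  unfolding rauzy_scheme_def by blast

lemma rs_front: "rauzy_scheme G W \<Longrightarrow> e1 \<in> edges G \<Longrightarrow> e2 \<in> edges G \<Longrightarrow> e1 \<noteq> e2 \<Longrightarrow> src G e1 = src G e2
   \<Longrightarrow> distributing G (src G e1) \<Longrightarrow> frontw G e1 \<noteq> [] \<and> frontw G e2 \<noteq> [] \<and> hd (frontw G e1) \<noteq> hd (frontw G e2)"
  unfolding rauzy_scheme_def by blast

lemma rs_back: "rauzy_scheme G W \<Longrightarrow> e1 \<in> edges G \<Longrightarrow> e2 \<in> edges G \<Longrightarrow> e1 \<noteq> e2 \<Longrightarrow> tgt G e1 = tgt G e2
   \<Longrightarrow> collecting G (tgt G e1) \<Longrightarrow> backw G e1 \<noteq> [] \<and> backw G e2 \<noteq> [] \<and> last (backw G e1) \<noteq> last (backw G e2)"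
  unfolding rauzy_scheme_def by blast

lemma rs_finite: "rauzy_scheme G W \<Longrightarrow> finite (edges G)"
  unfolding rauzy_scheme_def graph_with_words_def by blast

lemma front_ne:
  assumes R: "rauzy_scheme G W" and e: "e \<in> edges G" and d: "distributing G (src G e)"
  shows "frontw G e \<noteq> []"
proof -
  have c: "card {e' \<in> edges G. src G e' = src G e} > 1" using d by (simp add: distributing_def out_deg_def)
  have "\<exists>e'. e' \<in> edges G \<and> src G e' = src G e \<and> e' \<noteq> e"
  proof (rule ccontr)
    assume "\<not> ?thesis"
    then have "{e' \<in> edges G. src G e' = src G e} \<subseteq> {e}" by auto
    then have "card {e' \<in> edges G. src G e' = src G e} \<le> 1" using card_mono[of "{e}"] by fastforce
    then show False using c by simp
  qed
  then obtain e' where "e' \<in> edges G" "src G e' = src G e" "e' \<noteq> e" by blast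
  then show ?thesis using rs_front[OF R e, of e'] d by auto
qed

lemma back_ne:
  assumes R: "rauzy_scheme G W" and e: "e \<in> edges G" and d: "collecting G (tgt G e)"
  shows "backw G e \<noteq> []"
proof -
  have c: "card {e' \<in> edges G. tgt G e' = tgt G e} > 1" using d by (simp add: collecting_def in_deg_def)
  have "\<exists>e'. e' \<in> edges G \<and> tgt G e' = tgt G e \<and> e' \<noteq> e"
  proof (rule ccontr)
    assume "\<not> ?thesis"
    then have "{e' \<in> edges G. tgt G e' = tgt G e} \<subseteq> {e}" by auto
    then have "card {e' \<in> edges G. tgt G e' = tgt G e} \<le> 1" using card_mono[of "{e}"] by fastforce
    then show False using c by simp
  qed
  then obtain e' where "e' \<in> edges G" "tgt G e' = tgt G e" "e' \<noteq> e" by blast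
  then show ?thesis using rs_back[OF R e, of e'] d by auto
qed

lemma embed:
  assumes R: "rauzy_scheme G W" and ss: "symmetric_path G (s1 @ l @ s2)" and sl: "symmetric_path G l"
  shows "path_front G (s1 @ l) = Cb G s1 @ path_front G l"
proof (cases "s1 = []")
  case True then show ?thesis by simp
next
  case False
  have ln: "l \<noteq> []" using sl by (simp add: symmetric_path_def is_path_def)
  have p: "is_path G (s1 @ l)"
  proof (cases "s2 = []")
    case True then show ?thesis using ss by (simp add: symmetric_path_def)
  next
    case F2: False
    have "is_path G ((s1 @ l) @ s2)" using ss by (simp add: symmetric_path_def)
    then show ?thesis using is_path_append[of "s1 @ l" s2 G] F2 ln by simp
  qed
  have "symmetric_path G (s1 @ l)" using p ss sl False ln by (simp add: symmetric_path_def)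
  then have "path_front G (s1 @ l) = path_back G (s1 @ l)" by (rule rs_FB[OF R])
  also have "\<dots> = Cb G s1 @ path_back G l" using B_append ln by blast
  also have "\<dots> = Cb G s1 @ path_front G l" using rs_FB[OF R sl] by simp
  finally show ?thesis .
qed


lemma finite_occ: "finite (occurrences u w)"
  by (rule finite_subset[of _ "{..length w}"]) (auto simp: occurrences_def)

lemma occ_decomp:
  assumes R: "rauzy_scheme G W" and ss: "symmetric_path G s" and sl: "symmetric_path G l"
    and eq: "path_front G s = A @ path_front G l @ z"
  shows "\<exists>s1 s2. s = s1 @ l @ s2 \<and> Cb G s1 = A \<and> z = Cf G s2"
proof -
  define FL where "FL = path_front G l"
  define FS where "FS = path_front G s"
  define occL where "occL = occurrences l s"
  define occF where "occF = occurrences FL FS"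
  define pos where "pos i = length (Cb G (take i s))" for i
  have ln: "l \<noteq> []" using sl by (simp add: symmetric_path_def is_path_def)
  have sp: "is_path G s" using ss by (simp add: symmetric_path_def)
  have dec: "s = take i s @ l @ drop (i + length l) s" if "i \<in> occL" for i
  proof -
    have "take (length l) (drop i s) = l" using that by (simp add: occL_def occurrences_def)
    then show ?thesis by (metis append_take_drop_id drop_drop add.commute)
  qed
  have Fdec: "FS = Cb G (take i s) @ FL @ Cf G (drop (i + length l) s)" if "i \<in> occL" for i
  proof -
    have "FS = path_front G ((take i s @ l) @ drop (i + length l) s)" using dec[OF that] FS_def by simp
    also have "\<dots> = path_front G (take i s @ l) @ Cf G (drop (i + length l) s)"
      using F_append ln by blast
    also have "path_front G (take i s @ l) = Cb G (take i s) @ FL"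
      using embed[OF R _ sl, of "take i s" "drop (i + length l) s"] dec[OF that] ss FL_def by simp
    finally show ?thesis by simp
  qed
  have posin: "pos i \<in> occF" if "i \<in> occL" for i
    using Fdec[OF that] by (simp add: occF_def occurrences_def pos_def)
  have mono: "pos i < pos i'" if th: "i \<in> occL" "i' \<in> occL" "i < i'" for i i'
  proof -
    have il: "i' + length l \<le> length s" using th(2) by (simp add: occL_def occurrences_def)
    then have i's: "i' < length s" using ln by (cases l) auto
    obtain j where j: "i' = Suc j" using th(3) by (cases i') auto
    have t: "take i' s = take j s @ [s ! j]" using j i's by (simp add: take_Suc_conv_app_nth)
    have tg: "tgt G (s ! j) = src G (s ! i')" using sp i's j unfolding is_path_def by simp
    have "drop i' s = l @ drop (i' + length l) s" using dec[OF th(2)]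
      by (metis append_eq_conv_conj length_take min.absorb2 il le_add1 order_trans)
    then have "s ! i' = hd l" using i's ln by (metis hd_append2 hd_drop_conv_nth)
    then have col: "collecting G (tgt G (s ! j))" using tg sl by (simp add: symmetric_path_def)
    have ed: "s ! j \<in> edges G" using sp i's j unfolding is_path_def by auto
    have bn: "backw G (s ! j) \<noteq> []" using back_ne[OF R ed col] .
    have "take j s = take i s @ take (j - i) (drop i s)" using th(3) j
      by (metis le_add_diff_inverse less_Suc_eq_le take_add)
    then have "pos i \<le> length (Cb G (take j s))" by (simp add: pos_def)
    also have "\<dots> < pos i'" using t col bn by (simp add: pos_def)
    finally show ?thesis .
  qed
  have inj: "inj_on pos occL"
    by (rule inj_onI) (metis linorder_neqE_nat mono less_irrefl)
  have Ain: "length A \<in> occF" using eq by (simp add: occF_def occurrences_def FS_def FL_def)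
  have c1: "card occF \<ge> 1" using Ain finite_occ[of FL FS] occF_def
    by (metis One_nat_def Suc_leI card_gt_0_iff empty_iff)
  have "occ_count l s \<ge> card occF"
    by (rule rs_occ[OF R sl ss c1]) (simp add: occ_count_def occF_def FL_def FS_def)
  then have c2: "card occL \<ge> card occF" by (simp add: occ_count_def occL_def)
  have sub: "pos ` occL \<subseteq> occF" using posin by blast
  have "pos ` occL = occF"
    by (rule card_seteq) (use sub c2 card_image[OF inj] finite_occ occF_def in auto)
  then obtain i where i: "i \<in> occL" "pos i = length A" using Ain by force
  have "Cb G (take i s) @ FL @ Cf G (drop (i + length l) s) = A @ FL @ z"
    using Fdec[OF i(1)] eq FS_def FL_def by simp
  then have "Cb G (take i s) = A \<and> z = Cf G (drop (i + length l) s)"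
    using i(2) by (simp add: pos_def)
  then show ?thesis using dec[OF i(1)] by blast
qed


lemma ext_right:
  "is_path G p \<Longrightarrow> distributing G (tgt G (last p)) \<Longrightarrow>
   \<exists>q r. p = q @ r \<and> q \<noteq> [] \<and> distributing G (tgt G (last q)) \<and> Cf G (tl q) = []"
proof (induction p)
  case Nil then show ?case by (simp add: is_path_def)
next
  case (Cons e ds)
  show ?case
  proof (cases "distributing G (tgt G e)")
    case True then show ?thesis by (intro exI[of _ "[e]"] exI[of _ ds]) simp
  next
    case False
    then have dn: "ds \<noteq> []" using Cons.prems by auto
    then have p: "is_path G ds" "tgt G e = src G (hd ds)" using Cons.prems(1) by (auto simp: is_path_Cons)
    have "distributing G (tgt G (last ds))" using Cons.prems(2) dn by simp
    then obtain q r where qr: "ds = q @ r" "q \<noteq> []" "distributing G (tgt G (last q))" "Cf G (tl q) = []"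
      using Cons.IH p by blast
    have "Cf G q = []" using qr p False dn by (cases q) auto
    then show ?thesis using qr by (intro exI[of _ "e # q"] exI[of _ r]) simp
  qed
qed

lemma ext_left:
  "is_path G p \<Longrightarrow> collecting G (src G (hd p)) \<Longrightarrow>
   \<exists>r q. p = r @ q \<and> q \<noteq> [] \<and> collecting G (src G (hd q)) \<and> Cb G (butlast q) = []"
proof (induction p rule: rev_induct)
  case Nil then show ?case by (simp add: is_path_def)
next
  case (snoc e p')
  show ?case
  proof (cases "p' = [] \<or> collecting G (src G e)")
    case True then show ?thesis using snoc.prems by (intro exI[of _ p'] exI[of _ "[e]"]) auto
  next
    case False
    then have pn: "p' \<noteq> []" and nc: "\<not> collecting G (src G e)" by auto
    then have p: "is_path G p'" "tgt G (last p') = src G e" using snoc.prems(1) is_path_append[of p' "[e]" G] by auto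
    have "collecting G (src G (hd p'))" using snoc.prems(2) pn by simp
    then obtain r q where qr: "p' = r @ q" "q \<noteq> []" "collecting G (src G (hd q))" "Cb G (butlast q) = []"
      using snoc.IH p by blast
    have "q = butlast q @ [last q]" using qr(2) by simp
    then have "Cb G q = []" using qr p nc pn
      by (metis Cb_simps(1,2,3) append_self_conv last_appendR)
    then show ?thesis using qr by (intro exI[of _ r] exI[of _ "q @ [e]"]) simp
  qed
qed


lemma sym_facts: "symmetric_path G l \<Longrightarrow> l \<noteq> [] \<and> is_path G l \<and> collecting G (src G (hd l)) \<and> distributing G (tgt G (last l))"
  by (simp add: symmetric_path_def is_path_def)

lemma right_step:
  assumes R: "rauzy_scheme G W" and ss: "symmetric_path G s" and sl: "symmetric_path G l"
    and eq: "path_front G s = A @ path_front G l @ z" and zn: "z \<noteq> []"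
  shows "\<exists>e l'. e \<in> edges G \<and> src G e = tgt G (last l) \<and> symmetric_path G l' \<and>
     path_front G l' = path_front G l @ frontw G e \<and> (\<exists>w. z = frontw G e @ w)"
proof -
  obtain s1 s2 where d: "s = s1 @ l @ s2" "z = Cf G s2" using occ_decomp[OF R ss sl eq] by blast
  have s2n: "s2 \<noteq> []" using d zn by auto
  have L: "l \<noteq> []" "is_path G l" "collecting G (src G (hd l))" "distributing G (tgt G (last l))"
    using sym_facts[OF sl] by auto
  have S: "is_path G s" "distributing G (tgt G (last s))" using sym_facts[OF ss] by auto
  have pl2: "is_path G (l @ s2)"
    using S(1) d(1) is_path_append[of s1 "l @ s2" G] L(1) by (cases "s1 = []") auto
  then have p2: "is_path G s2" "tgt G (last l) = src G (hd s2)"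
    using is_path_append[of l s2 G] L(1) s2n by auto
  have "distributing G (tgt G (last s2))" using S(2) d(1) s2n by simp
  then obtain q r where qr: "s2 = q @ r" "q \<noteq> []" "distributing G (tgt G (last q))" "Cf G (tl q) = []"
    using ext_right[OF p2(1)] by blast
  define e where "e = hd q"
  have qe: "q = e # tl q" using qr(2) e_def by simp
  have hs2: "hd s2 = e" using qr e_def by simp
  have ee: "e \<in> edges G" using p2(1) s2n hs2 by (cases s2) (auto simp: is_path_Cons)
  have de: "distributing G (src G e)" using L(4) p2(2) hs2 by simp
  have plq: "is_path G (l @ q)"
    using pl2 qr(1) is_path_append[of "l @ q" r G] L(1) by (cases "r = []") auto
  have sym': "symmetric_path G (l @ q)" using plq L qr(2,3) by (simp add: symmetric_path_def)
  have "path_front G (l @ q) = path_front G l @ Cf G q" using F_append L(1) by blast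
  also have "Cf G q = frontw G e" using qe de qr(4) by (metis Cf_simps(3) append.right_neutral)
  finally have F': "path_front G (l @ q) = path_front G l @ frontw G e" .
  have "z = frontw G e @ Cf G (tl q) @ Cf G r" using d(2) qr(1) qe de
    by (metis Cf_simps(2,3) append.assoc)
  then show ?thesis using ee de p2(2) hs2 sym' F' by (intro exI[of _ e] exI[of _ "l @ q"]) auto
qed

lemma left_step:
  assumes R: "rauzy_scheme G W" and ss: "symmetric_path G s" and sl: "symmetric_path G l"
    and eq: "path_front G s = A @ path_front G l @ z" and An: "A \<noteq> []"
  shows "\<exists>e l'. e \<in> edges G \<and> tgt G e = src G (hd l) \<and> symmetric_path G l' \<and>
     path_front G l' = backw G e @ path_front G l \<and> (\<exists>w. A = w @ backw G e)"
proof -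
  obtain s1 s2 where d: "s = s1 @ l @ s2" "Cb G s1 = A" using occ_decomp[OF R ss sl eq] by blast
  have s1n: "s1 \<noteq> []" using d An by auto
  have L: "l \<noteq> []" "is_path G l" "collecting G (src G (hd l))" "distributing G (tgt G (last l))"
    using sym_facts[OF sl] by auto
  have S: "is_path G s" "collecting G (src G (hd s))" using sym_facts[OF ss] by auto
  have pl1: "is_path G (s1 @ l)"
    using S(1) d(1) is_path_append[of "s1 @ l" s2 G] L(1) by (cases "s2 = []") auto
  then have p1: "is_path G s1" "tgt G (last s1) = src G (hd l)"
    using is_path_append[of s1 l G] L(1) s1n by auto
  have "collecting G (src G (hd s1))" using S(2) d(1) s1n by simp
  then obtain r q where qr: "s1 = r @ q" "q \<noteq> []" "collecting G (src G (hd q))" "Cb G (butlast q) = []"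
    using ext_left[OF p1(1)] by blast
  define e where "e = last q"
  have qe: "q = butlast q @ [e]" using qr(2) e_def by simp
  have ls1: "last s1 = e" using qr e_def by simp
  have ee: "e \<in> edges G" using p1(1) ls1 s1n unfolding is_path_def by (metis last_in_set subsetD)
  have ce: "collecting G (tgt G e)" using L(3) p1(2) ls1 by simp
  have pql: "is_path G (q @ l)"
    using pl1 qr(1) is_path_append[of r "q @ l" G] L(1) by (cases "r = []") auto
  have sym': "symmetric_path G (q @ l)" using pql L qr(2,3) by (simp add: symmetric_path_def)
  have Cq: "Cb G q = backw G e" using qe ce qr(4) by (metis Cb_simps(1,2,3) append_Nil append.right_neutral)
  have "path_front G (q @ l) = path_back G (q @ l)" using rs_FB[OF R sym'] .
  also have "\<dots> = Cb G q @ path_back G l" using B_append L(1) by blast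
  also have "\<dots> = backw G e @ path_front G l" using Cq rs_FB[OF R sl] by simp
  finally have F': "path_front G (q @ l) = backw G e @ path_front G l" .
  have "A = Cb G r @ backw G e" using d(2) qr(1) Cq by simp
  then show ?thesis using ee ce p1(2) ls1 sym' F' by (intro exI[of _ e] exI[of _ "q @ l"]) auto
qed


theorem mainTheorem7:
  fixes G :: "('v, 'e, 'a) gww" and W :: "nat \<Rightarrow> 'a" and u :: "'a list"
  assumes "recurrent W"
    and "rauzy_scheme G W"
    and "bispecial u W"
    and "\<exists>l1. symmetric_path G l1 \<and> factor (path_front G l1) u"
  shows "\<exists>l. symmetric_path G l \<and> path_front G l = u"
proof -
  note R = assms(2)
  define P where "P l \<longleftrightarrow> symmetric_path G l \<and> factor (path_front G l) u" for l
  obtain l1 where "P l1" using assms(4) P_def by blast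
  moreover have "\<forall>l. P l \<longrightarrow> length (path_front G l) < Suc (length u)"
    by (auto simp: P_def factor_def)
  ultimately obtain l where Pl: "P l" and mx: "\<And>l'. P l' \<Longrightarrow> length (path_front G l') \<le> length (path_front G l)"
    using ex_has_greatest_nat[of P l1 "\<lambda>l. length (path_front G l)" "Suc (length u)"] by blast
  have sl: "symmetric_path G l" using Pl P_def by simp
  obtain x y where u: "u = x @ path_front G l @ y" using Pl P_def factor_def by blast
  have L: "l \<noteq> []" "is_path G l" "collecting G (src G (hd l))" "distributing G (tgt G (last l))"
    using sym_facts[OF sl] by auto
  have y: "y = []"
  proof (rule ccontr)
    assume yn: "y \<noteq> []"
    have key: "\<exists>e r. e \<in> edges G \<and> src G e = tgt G (last l) \<and> frontw G e = y @ [c] @ r"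
      if fc: "factor_of_inf (u @ [c]) W" for c
    proof -
      obtain s where s: "symmetric_path G s" "factor (u @ [c]) (path_front G s)"
        using rs_cover[OF R fc] by blast
      then obtain p q where "path_front G s = p @ (u @ [c]) @ q" by (auto simp: factor_def)
      then have "path_front G s = (p @ x) @ path_front G l @ (y @ [c] @ q)" using u by simp
      then obtain e l' w where e: "e \<in> edges G" "src G e = tgt G (last l)" "symmetric_path G l'"
        "path_front G l' = path_front G l @ frontw G e" "y @ [c] @ q = frontw G e @ w"
        using right_step[OF R s(1) sl] by blast
      have fn: "frontw G e \<noteq> []" using front_ne[OF R e(1)] e(2) L(4) by simp
      show ?thesis
      proof (cases "\<exists>r. y = frontw G e @ r")
        case True
        then obtain r where "y = frontw G e @ r" by blast
        then have "u = x @ path_front G l' @ r" using u e(4) by simp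
        then have "P l'" using e(3) by (auto simp: P_def factor_def)
        then show ?thesis using mx[of l'] e(4) fn by simp
      next
        case False
        then obtain us where "frontw G e = y @ us" "us @ w = [c] @ q"
          using e(5) by (auto simp: append_eq_append_conv2)
        moreover have "us \<noteq> []" using False calculation by auto
        ultimately show ?thesis using e by (cases us) auto
      qed
    qed
    obtain a b where ab: "a \<noteq> b" "factor_of_inf (u @ [a]) W" "factor_of_inf (u @ [b]) W"
      using assms(3) by (auto simp: bispecial_def right_special_def)
    obtain ea ra where ea: "ea \<in> edges G" "src G ea = tgt G (last l)" "frontw G ea = y @ [a] @ ra"
      using key[OF ab(2)] by blast
    obtain eb rb where eb: "eb \<in> edges G" "src G eb = tgt G (last l)" "frontw G eb = y @ [b] @ rb"
      using key[OF ab(3)] by blast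
    show False
    proof (cases "ea = eb")
      case True then show False using ea eb ab(1) by simp
    next
      case False
      then show False using rs_front[OF R ea(1) eb(1) False] ea eb L(4) yn by simp
    qed
  qed
  have x: "x = []"
  proof (rule ccontr)
    assume xn: "x \<noteq> []"
    have key: "\<exists>e r. e \<in> edges G \<and> tgt G e = src G (hd l) \<and> backw G e = r @ [c] @ x"
      if fc: "factor_of_inf (c # u) W" for c
    proof -
      obtain s where s: "symmetric_path G s" "factor (c # u) (path_front G s)"
        using rs_cover[OF R fc] by blast
      then obtain p q where "path_front G s = p @ (c # u) @ q" by (auto simp: factor_def)
      then have "path_front G s = (p @ [c] @ x) @ path_front G l @ (y @ q)" using u by simp
      then obtain e l' w where e: "e \<in> edges G" "tgt G e = src G (hd l)" "symmetric_path G l'"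
        "path_front G l' = backw G e @ path_front G l" "p @ [c] @ x = w @ backw G e"
        using left_step[OF R s(1) sl] by blast
      have bn: "backw G e \<noteq> []" using back_ne[OF R e(1)] e(2) L(3) by simp
      show ?thesis
      proof (cases "\<exists>r. x = r @ backw G e")
        case True
        then obtain r where "x = r @ backw G e" by blast
        then have "u = r @ path_front G l' @ y" using u e(4) by simp
        then have "P l'" using e(3) by (auto simp: P_def factor_def)
        then show ?thesis using mx[of l'] e(4) bn by simp
      next
        case False
        have "(p @ [c]) @ x = w @ backw G e" using e(5) by simp
        then obtain us where us: "(p @ [c] = w @ us \<and> us @ x = backw G e) \<or> ((p @ [c]) @ us = w \<and> x = us @ backw G e)"
          using append_eq_append_conv2[THEN iffD1] by blast
        with False have us1: "p @ [c] = w @ us" "us @ x = backw G e" by auto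
        have "us \<noteq> []" using us1 False by (metis append_Nil)
        then have "us = butlast us @ [c]" using us1(1) by (metis append_butlast_last_id last_appendR last_snoc)
        then have "backw G e = butlast us @ [c] @ x" using us1(2) by (metis append.assoc)
        then show ?thesis using e by blast
      qed
    qed
    obtain a b where ab: "a \<noteq> b" "factor_of_inf (a # u) W" "factor_of_inf (b # u) W"
      using assms(3) by (auto simp: bispecial_def left_special_def)
    obtain ea ra where ea: "ea \<in> edges G" "tgt G ea = src G (hd l)" "backw G ea = ra @ [a] @ x"
      using key[OF ab(2)] by blast
    obtain eb rb where eb: "eb \<in> edges G" "tgt G eb = src G (hd l)" "backw G eb = rb @ [b] @ x"
      using key[OF ab(3)] by blast
    show False
    proof (cases "ea = eb")
      case True then show False using ea eb ab(1) by simp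
    next
      case False
      then show False using rs_back[OF R ea(1) eb(1) False] ea eb L(3) xn by simp
    qed
  qed
  show ?thesis using sl u x y by auto
qed

end
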